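(* Let $\mathcal{H},\mathcal{K}$ be finite-dimensional Hilbert spaces and $\Gamma:\mathcal{B}(\mathcal{H})\to\mathcal{B}(\mathcal{K})$ a completely positive trace-preserving map. Suppose there exist a completely positive map $\mathcal{F}:\mathcal{B}(\mathcal{H})\to\mathcal{B}(\mathcal{K})$ and a real number $\epsilon>0$ such that for every density operator $\rho$ on $\mathcal{H}$, $\epsilon\le\operatorname{tr}[\mathcal{F}(\rho)]$ and $\mathcal{F}(\rho)=\operatorname{tr}[\mathcal{F}(\rho)]\,\Gamma(\rho)$. Then either $\Gamma(\cdot)=\rho'\operatorname{tr}[\cdot]$ for some density operator $\rho'$ on $\mathcal{K}$, or $\Gamma=\mathcal{F}/p$ for some positive number $p$. *)

theory Defs
  imports Complex_Main "Jordan_Normal_Form.Matrix"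
begin

text \<open>Operators on a finite-dimensional Hilbert space C^n are represented as complex
  n x n matrices (elements of carrier_mat n n). A map B(C^n) -> B(C^m) is a function on
  matrices; only its behaviour on carrier_mat n n matters.\<close>

definition mtrace :: "complex mat \<Rightarrow> complex" where
  "mtrace A = (\<Sum>i<dim_row A. A $$ (i, i))"

definition psd :: "nat \<Rightarrow> complex mat \<Rightarrow> bool" where
  "psd n A \<longleftrightarrow> A \<in> carrier_mat n n \<and>
     (\<forall>v \<in> carrier_vec n. Im (conjugate v \<bullet> (A *\<^sub>v v)) = 0 \<and> 0 \<le> Re (conjugate v \<bullet> (A *\<^sub>v v)))"

definition density :: "nat \<Rightarrow> complex mat \<Rightarrow> bool" where
  "density n \<rho> \<longleftrightarrow> psd n \<rho> \<and> mtrace \<rho> = 1"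

definition linear_map_mat :: "nat \<Rightarrow> nat \<Rightarrow> (complex mat \<Rightarrow> complex mat) \<Rightarrow> bool" where
  "linear_map_mat n m \<Phi> \<longleftrightarrow>
     (\<forall>A \<in> carrier_mat n n. \<Phi> A \<in> carrier_mat m m) \<and>
     (\<forall>A \<in> carrier_mat n n. \<forall>B \<in> carrier_mat n n. \<Phi> (A + B) = \<Phi> A + \<Phi> B) \<and>
     (\<forall>A \<in> carrier_mat n n. \<forall>c. \<Phi> (c \<cdot>\<^sub>m A) = c \<cdot>\<^sub>m \<Phi> A)"

text \<open>(id_k \<otimes> \<Phi>) applied to a k x k block matrix with n x n blocks
  (block (a,b) of X occupies rows a*n.., columns b*n..).\<close>
definition ampliate :: "nat \<Rightarrow> nat \<Rightarrow> nat \<Rightarrow> (complex mat \<Rightarrow> complex mat) \<Rightarrow> complex mat \<Rightarrow> complex mat" where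
  "ampliate k n m \<Phi> X = mat (k * m) (k * m) (\<lambda>(i, j).
      \<Phi> (mat n n (\<lambda>(r, s). X $$ ((i div m) * n + r, (j div m) * n + s))) $$ (i mod m, j mod m))"

definition completely_positive :: "nat \<Rightarrow> nat \<Rightarrow> (complex mat \<Rightarrow> complex mat) \<Rightarrow> bool" where
  "completely_positive n m \<Phi> \<longleftrightarrow> linear_map_mat n m \<Phi> \<and>
     (\<forall>k. \<forall>X. psd (k * n) X \<longrightarrow> psd (k * m) (ampliate k n m \<Phi> X))"

definition trace_preserving :: "nat \<Rightarrow> (complex mat \<Rightarrow> complex mat) \<Rightarrow> bool" where
  "trace_preserving n \<Phi> \<longleftrightarrow> (\<forall>A \<in> carrier_mat n n. mtrace (\<Phi> A) = mtrace A)"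

end

theory Submission
  imports Defs
begin

definition quad :: "nat \<Rightarrow> complex mat \<Rightarrow> complex vec \<Rightarrow> complex" where
  "quad n A v = (\<Sum>i<n. \<Sum>j<n. cnj (v$i) * A$$(i,j) * v$j)"

lemma quad_eq: assumes "A \<in> carrier_mat n n" "v \<in> carrier_vec n"
  shows "conjugate v \<bullet> (A *\<^sub>v v) = quad n A v"
  using assms unfolding quad_def scalar_prod_def
  by (auto simp: atLeast0LessThan sum_distrib_left mult.assoc scalar_prod_def intro!: sum.cong)

lemma psd_iff: "psd n A \<longleftrightarrow> A \<in> carrier_mat n n \<and>
   (\<forall>v \<in> carrier_vec n. Im (quad n A v) = 0 \<and> 0 \<le> Re (quad n A v))"
  unfolding psd_def using quad_eq by auto

lemma psd_diag: assumes "psd n A" "i < n"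
  shows "Im (A$$(i,i)) = 0 \<and> 0 \<le> Re (A$$(i,i))"
proof -
  have "quad n A (unit_vec n i) = A$$(i,i)"
  proof -
    have "quad n A (unit_vec n i) = (\<Sum>a<n. if a = i then (\<Sum>b<n. if b = i then A$$(a,b) else 0) else 0)"
      unfolding quad_def using assms(2) by (intro sum.cong refl) (auto simp: if_distrib[of "\<lambda>x. _ * x"] sum.delta cong: if_cong)
    also have "\<dots> = A$$(i,i)" using assms(2) by (simp add: sum.delta)
    finally show ?thesis .
  qed
  then show ?thesis using assms unfolding psd_iff by (metis unit_vec_carrier)
qed

lemma mtrace_psd: assumes "psd n A"
  shows "Im (mtrace A) = 0 \<and> 0 \<le> Re (mtrace A)"
proof -
  have d: "dim_row A = n" using assms unfolding psd_def by auto
  show ?thesis unfolding mtrace_def d using psd_diag[OF assms]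
    by (auto simp: Im_sum Re_sum intro: sum_nonneg)
qed

lemma psd_mid: assumes "psd n A" "psd n B"
  shows "psd n ((1/2) \<cdot>\<^sub>m (A + B))"
proof -
  have c: "A \<in> carrier_mat n n" "B \<in> carrier_mat n n" using assms unfolding psd_def by auto
  have q: "quad n ((1/2) \<cdot>\<^sub>m (A + B)) v = (1/2) * (quad n A v + quad n B v)" for v
  proof -
    have "quad n ((1/2) \<cdot>\<^sub>m (A + B)) v = (\<Sum>i<n. \<Sum>j<n. (1/2) * (cnj (v$i) * A$$(i,j) * v$j + cnj (v$i) * B$$(i,j) * v$j))"
      unfolding quad_def using c by (intro sum.cong refl) (auto simp: algebra_simps)
    then show ?thesis unfolding quad_def by (simp add: sum.distrib sum_distrib_left sum_divide_distrib[symmetric])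
  qed
  show ?thesis using assms c unfolding psd_iff q by auto
qed

definition outerf :: "nat \<Rightarrow> (nat \<Rightarrow> complex) \<Rightarrow> (nat \<Rightarrow> complex) \<Rightarrow> complex mat" where
  "outerf n f g = mat n n (\<lambda>(i,j). f i * cnj (g j))"

lemma outerf_carrier[simp]: "outerf n f g \<in> carrier_mat n n"
  unfolding outerf_def by auto

lemma outerf_dim[simp]: "dim_row (outerf n f g) = n" "dim_col (outerf n f g) = n"
  unfolding outerf_def by auto

lemma outerf_index[simp]: "i < n \<Longrightarrow> j < n \<Longrightarrow> outerf n f g $$ (i,j) = f i * cnj (g j)"
  unfolding outerf_def by auto

lemma psd_outer: "psd n (outerf n f f)"
proof -
  have "quad n (outerf n f f) v = cnj (\<Sum>j<n. cnj (f j) * v$j) * (\<Sum>j<n. cnj (f j) * v$j)" for v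
  proof -
    have "quad n (outerf n f f) v = (\<Sum>i<n. \<Sum>j<n. (cnj (v$i) * f i) * (cnj (f j) * v$j))"
      unfolding quad_def by (intro sum.cong refl) (auto simp: algebra_simps)
    also have "\<dots> = (\<Sum>i<n. cnj (v$i) * f i) * (\<Sum>j<n. cnj (f j) * v$j)"
      by (simp add: sum_product)
    also have "(\<Sum>i<n. cnj (v$i) * f i) = cnj (\<Sum>j<n. cnj (f j) * v$j)"
      by (simp add: mult.commute)
    finally show ?thesis .
  qed
  moreover have "Im (cnj z * z) = 0 \<and> 0 \<le> Re (cnj z * z)" for z :: complex by simp
  ultimately show ?thesis unfolding psd_iff by (metis outerf_carrier)
qed

lemma quad_smult: "A \<in> carrier_mat n n \<Longrightarrow> quad n (c \<cdot>\<^sub>m A) v = c * quad n A v"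
  unfolding quad_def by (auto simp: sum_distrib_left mult.assoc intro!: sum.cong)

lemma psd_smult: assumes "psd n A" "0 \<le> c" shows "psd n (complex_of_real c \<cdot>\<^sub>m A)"
  using assms unfolding psd_iff by (auto simp: quad_smult)

lemma mtrace_smult: "A \<in> carrier_mat k k \<Longrightarrow> mtrace (c \<cdot>\<^sub>m A) = c * mtrace A"
  unfolding mtrace_def by (auto simp: sum_distrib_left)

lemma mtrace_add: "A \<in> carrier_mat k k \<Longrightarrow> B \<in> carrier_mat k k \<Longrightarrow> mtrace (A + B) = mtrace A + mtrace B"
  unfolding mtrace_def by (auto simp: sum.distrib)

lemma mtrace_outer: "mtrace (outerf n f f) = complex_of_real (\<Sum>i<n. (cmod (f i))^2)"
  unfolding mtrace_def by (auto simp: complex_norm_square[symmetric] intro!: sum.cong)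

lemma density_outer: assumes "(\<Sum>i<n. (cmod (f i))^2) > 0"
  shows "density n (complex_of_real (1 / (\<Sum>i<n. (cmod (f i))^2)) \<cdot>\<^sub>m outerf n f f)"
proof -
  define N where "N = (\<Sum>i<n. (cmod (f i))^2)"
  have N: "N > 0" using assms N_def by simp
  have t: "mtrace (outerf n f f) = complex_of_real N" unfolding N_def by (rule mtrace_outer)
  have "psd n (complex_of_real (1 / N) \<cdot>\<^sub>m outerf n f f)" using N by (intro psd_smult psd_outer) auto
  moreover have "mtrace (complex_of_real (1 / N) \<cdot>\<^sub>m outerf n f f) = 1"
    using N by (simp add: mtrace_smult[OF outerf_carrier] t of_real_mult[symmetric] del: of_real_mult of_real_divide)
  ultimately show ?thesis unfolding density_def N_def by simp
qed

lemma zsm: "(Y :: complex mat) \<in> carrier_mat m m \<Longrightarrow> 0 \<cdot>\<^sub>m Y = 0\<^sub>m m m"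
  by (rule eq_matI) auto

lemma lin_add: "linear_map_mat n m \<Phi> \<Longrightarrow> A \<in> carrier_mat n n \<Longrightarrow> B \<in> carrier_mat n n \<Longrightarrow> \<Phi> (A + B) = \<Phi> A + \<Phi> B"
  unfolding linear_map_mat_def by auto
lemma lin_smult: "linear_map_mat n m \<Phi> \<Longrightarrow> A \<in> carrier_mat n n \<Longrightarrow> \<Phi> (c \<cdot>\<^sub>m A) = c \<cdot>\<^sub>m \<Phi> A"
  unfolding linear_map_mat_def by auto
lemma lin_carrier: "linear_map_mat n m \<Phi> \<Longrightarrow> A \<in> carrier_mat n n \<Longrightarrow> \<Phi> A \<in> carrier_mat m m"
  unfolding linear_map_mat_def by auto

lemma lin_zero: assumes "linear_map_mat n m \<Phi>" "linear_map_mat n m \<Psi>" "X \<in> carrier_mat n n"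
  shows "\<Phi> (0 \<cdot>\<^sub>m X) = \<Psi> (0 \<cdot>\<^sub>m X)"
proof -
  have "\<Phi> (0 \<cdot>\<^sub>m X) = 0 \<cdot>\<^sub>m \<Phi> X" by (rule lin_smult[OF assms(1,3)])
  also have "\<dots> = 0\<^sub>m m m" by (rule zsm[OF lin_carrier[OF assms(1,3)]])
  also have "\<dots> = 0 \<cdot>\<^sub>m \<Psi> X" by (rule zsm[OF lin_carrier[OF assms(2,3)], symmetric])
  also have "\<dots> = \<Psi> (0 \<cdot>\<^sub>m X)" by (rule lin_smult[OF assms(2,3), symmetric])
  finally show ?thesis .
qed

lemma polar: "outerf n f g =
  (1/4) \<cdot>\<^sub>m ((outerf n (\<lambda>i. f i + g i) (\<lambda>i. f i + g i) + (-1) \<cdot>\<^sub>m outerf n (\<lambda>i. f i - g i) (\<lambda>i. f i - g i))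
   + (\<i> \<cdot>\<^sub>m outerf n (\<lambda>i. f i + \<i> * g i) (\<lambda>i. f i + \<i> * g i) + (-\<i>) \<cdot>\<^sub>m outerf n (\<lambda>i. f i - \<i> * g i) (\<lambda>i. f i - \<i> * g i)))"
  (is "?L = ?R")
proof (rule eq_matI)
  fix i j assume "i < dim_row ?R" "j < dim_col ?R"
  then have ij: "i < n" "j < n" by auto
  have e: "f i * cnj (g j) = (1/4) * (((f i + g i) * cnj (f j + g j) + (-1) * ((f i - g i) * cnj (f j - g j)))
     + (\<i> * ((f i + \<i> * g i) * cnj (f j + \<i> * g j)) + (-\<i>) * ((f i - \<i> * g i) * cnj (f j - \<i> * g j))))"
    by (simp add: algebra_simps)
  show "?L $$ (i,j) = ?R $$ (i,j)" using ij e by simp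
qed auto

lemma agree_outer: assumes L: "linear_map_mat n m \<Phi>" "linear_map_mat n m \<Psi>"
  and D: "\<And>\<rho>. density n \<rho> \<Longrightarrow> \<Phi> \<rho> = \<Psi> \<rho>"
  shows "\<Phi> (outerf n f f) = \<Psi> (outerf n f f)"
proof (cases "(\<Sum>i<n. (cmod (f i))^2) > 0")
  case True
  define N where "N = (\<Sum>i<n. (cmod (f i))^2)"
  have N: "N > 0" using True N_def by simp
  define R where "R = complex_of_real (1 / N) \<cdot>\<^sub>m outerf n f f"
  have dR: "density n R" unfolding R_def N_def by (rule density_outer[OF True])
  have Rc: "R \<in> carrier_mat n n" unfolding R_def by simp
  have e: "outerf n f f = complex_of_real N \<cdot>\<^sub>m R"
    unfolding R_def using N by (intro eq_matI) auto
  show ?thesis unfolding e using lin_smult[OF L(1) Rc] lin_smult[OF L(2) Rc] D[OF dR] by simp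
next
  case False
  then have "(\<Sum>i<n. (cmod (f i))^2) = 0" by (metis less_eq_real_def sum_nonneg zero_le_power2)
  then have z: "\<forall>i<n. f i = 0" by (simp add: sum_nonneg_eq_0_iff)
  have e: "outerf n f f = 0 \<cdot>\<^sub>m outerf n f f" using z by (intro eq_matI) auto
  have "\<Phi> (0 \<cdot>\<^sub>m outerf n f f) = \<Psi> (0 \<cdot>\<^sub>m outerf n f f)" by (rule lin_zero[OF L]) simp
  then show ?thesis by (simp only: e[symmetric])
qed

lemma agree: assumes L: "linear_map_mat n m \<Phi>" "linear_map_mat n m \<Psi>"
  and D: "\<And>\<rho>. density n \<rho> \<Longrightarrow> \<Phi> \<rho> = \<Psi> \<rho>"
  and A: "A \<in> carrier_mat n n"
  shows "\<Phi> A = \<Psi> A"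
proof -
  have og: "\<Phi> (outerf n f g) = \<Psi> (outerf n f g)" for f g
  proof -
    note ao = agree_outer[OF L D]
    show ?thesis
      by (subst (1 2) polar) (simp add: lin_add[OF L(1)] lin_add[OF L(2)] lin_smult[OF L(1)] lin_smult[OF L(2)] ao)
  qed
  define C where "C k = mat n n (\<lambda>(r,s). if s < k then A$$(r,s) else 0)" for k
  have Cc: "C k \<in> carrier_mat n n" for k unfolding C_def by simp
  have "\<Phi> (C k) = \<Psi> (C k)" for k
  proof (induction k)
    case 0
    have "C 0 = 0 \<cdot>\<^sub>m A" unfolding C_def using A by (intro eq_matI) auto
    then show ?case using lin_zero[OF L A] by simp
  next
    case (Suc k)
    have "C (Suc k) = C k + outerf n (\<lambda>r. A$$(r,k)) (\<lambda>s. if s = k then 1 else 0)"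
      unfolding C_def by (intro eq_matI) (auto simp: less_Suc_eq)
    then show ?case using Suc lin_add[OF L(1) Cc] lin_add[OF L(2) Cc] og by simp
  qed
  moreover have "C n = A" unfolding C_def using A by (intro eq_matI) auto
  ultimately show ?thesis by metis
qed

lemma ampliate_one: assumes "linear_map_mat n m \<Phi>" "X \<in> carrier_mat n n"
  shows "ampliate 1 n m \<Phi> X = \<Phi> X"
proof -
  have c: "\<Phi> X \<in> carrier_mat m m" by (rule lin_carrier[OF assms])
  have "mat n n (\<lambda>(r, s). X $$ (r, s)) = X" using assms(2) by (intro eq_matI) auto
  then show ?thesis unfolding ampliate_def using c by (intro eq_matI) auto
qed

lemma cp_psd: assumes "completely_positive n m \<Phi>" "psd n X"
  shows "psd m (\<Phi> X)"
proof -
  have L: "linear_map_mat n m \<Phi>" using assms(1) unfolding completely_positive_def by simp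
  have X: "X \<in> carrier_mat n n" using assms(2) unfolding psd_def by simp
  have "psd (1 * m) (ampliate 1 n m \<Phi> X)" using assms unfolding completely_positive_def by (metis mult_1)
  then show ?thesis using ampliate_one[OF L X] by simp
qed

lemma scalar_key: fixes a b x y :: complex
  assumes "a \<noteq> b" "(1/2) * (a * x + b * y) = (1/2) * (a + b) * ((1/2) * (x + y))"
  shows "x = y"
proof -
  have "(a - b) * (x - y) = 0" using assms(2) by (simp add: algebra_simps)
  then show ?thesis using assms(1) by simp
qed

theorem lemma3:
  fixes n m :: nat and \<Gamma> F :: "complex mat \<Rightarrow> complex mat" and \<epsilon> :: real
  assumes "completely_positive n m \<Gamma>" and "trace_preserving n \<Gamma>"
    and "completely_positive n m F" and "\<epsilon> > 0"
    and "\<forall>\<rho>. density n \<rho> \<longrightarrow>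
           \<epsilon> \<le> Re (mtrace (F \<rho>)) \<and> F \<rho> = mtrace (F \<rho>) \<cdot>\<^sub>m \<Gamma> \<rho>"
  shows "(\<exists>\<rho>'. density m \<rho>' \<and> (\<forall>A \<in> carrier_mat n n. \<Gamma> A = mtrace A \<cdot>\<^sub>m \<rho>'))
       \<or> (\<exists>p::real. p > 0 \<and> (\<forall>A \<in> carrier_mat n n. \<Gamma> A = complex_of_real (1 / p) \<cdot>\<^sub>m F A))"
proof -
  have LG: "linear_map_mat n m \<Gamma>" using assms(1) unfolding completely_positive_def by simp
  have LF: "linear_map_mat n m F" using assms(3) unfolding completely_positive_def by simp
  have H: "\<epsilon> \<le> Re (mtrace (F \<rho>))" "F \<rho> = mtrace (F \<rho>) \<cdot>\<^sub>m \<Gamma> \<rho>" if "density n \<rho>" for \<rho>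
    using assms(5) that by auto
  have dc: "\<rho> \<in> carrier_mat n n" if "density n \<rho>" for \<rho>
    using that unfolding density_def psd_def by simp
  show ?thesis
  proof (cases "n = 0")
    case True
    have "\<Gamma> A = complex_of_real (1 / 1) \<cdot>\<^sub>m F A" if A: "A \<in> carrier_mat n n" for A
    proof -
      have eA: "A = 0 \<cdot>\<^sub>m A" using A True by (intro eq_matI) auto
      have "\<Gamma> A = \<Gamma> (0 \<cdot>\<^sub>m A)" using eA by (rule arg_cong)
      also have "\<dots> = 0\<^sub>m m m" using lin_smult[OF LG A] zsm[OF lin_carrier[OF LG A]] by simp
      finally have g: "\<Gamma> A = 0\<^sub>m m m" .
      have "F A = F (0 \<cdot>\<^sub>m A)" using eA by (rule arg_cong)
      also have "\<dots> = 0\<^sub>m m m" using lin_smult[OF LF A] zsm[OF lin_carrier[OF LF A]] by simp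
      finally have f: "F A = 0\<^sub>m m m" .
      show ?thesis unfolding g f by (intro eq_matI) auto
    qed
    then have "(1::real) > 0 \<and> (\<forall>A \<in> carrier_mat n n. \<Gamma> A = complex_of_real (1 / 1) \<cdot>\<^sub>m F A)" by simp
    then show ?thesis by blast
  next
    case False
    define e where "e i = (if i = 0 then 1 else (0::complex))" for i :: nat
    have "(\<Sum>i<n. (cmod (e i))^2) = 1" using False unfolding e_def
      by (simp add: if_distrib[of "\<lambda>x. (cmod x)^2"] sum.delta cong: if_cong)
    then obtain \<rho>0 where d0: "density n \<rho>0" using density_outer[where f=e and n=n] by fastforce
    have key: "\<Gamma> \<rho> = \<Gamma> \<sigma> \<or> mtrace (F \<rho>) = mtrace (F \<sigma>)" if d: "density n \<rho>" "density n \<sigma>" for \<rho> \<sigma>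
    proof (rule disjCI)
      assume ne: "mtrace (F \<rho>) \<noteq> mtrace (F \<sigma>)"
      have rc: "\<rho> \<in> carrier_mat n n" and sc: "\<sigma> \<in> carrier_mat n n" using d dc by auto
      define \<mu> where "\<mu> = (1/2) \<cdot>\<^sub>m (\<rho> + \<sigma>)"
      have "psd n \<mu>" unfolding \<mu>_def using d psd_mid unfolding density_def by blast
      moreover have "mtrace \<mu> = 1" unfolding \<mu>_def using d rc sc
        by (simp add: mtrace_smult[of _ n] mtrace_add[of _ n] density_def)
      ultimately have dm: "density n \<mu>" unfolding density_def by simp
      have Gm: "\<Gamma> \<mu> = (1/2) \<cdot>\<^sub>m (\<Gamma> \<rho> + \<Gamma> \<sigma>)" unfolding \<mu>_def
        using rc sc by (simp add: lin_smult[OF LG] lin_add[OF LG])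
      have Fm: "F \<mu> = (1/2) \<cdot>\<^sub>m (F \<rho> + F \<sigma>)" unfolding \<mu>_def
        using rc sc by (simp add: lin_smult[OF LF] lin_add[OF LF])
      have Xc: "\<Gamma> \<rho> \<in> carrier_mat m m" "\<Gamma> \<sigma> \<in> carrier_mat m m" using lin_carrier[OF LG] rc sc by auto
      have Fc: "F \<rho> \<in> carrier_mat m m" "F \<sigma> \<in> carrier_mat m m" using lin_carrier[OF LF] rc sc by auto
      have tm: "mtrace (F \<mu>) = (1/2) * (mtrace (F \<rho>) + mtrace (F \<sigma>))"
        unfolding Fm using Fc by (simp add: mtrace_smult[of _ m] mtrace_add[of _ m])
      have E: "F \<mu> = mtrace (F \<mu>) \<cdot>\<^sub>m \<Gamma> \<mu>" by (rule H(2)[OF dm])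
      show "\<Gamma> \<rho> = \<Gamma> \<sigma>"
      proof (rule eq_matI)
        fix i j assume "i < dim_row (\<Gamma> \<sigma>)" "j < dim_col (\<Gamma> \<sigma>)"
        then have ij: "i < m" "j < m" using Xc by auto
        have "F \<mu> $$ (i,j) = (mtrace (F \<mu>) \<cdot>\<^sub>m \<Gamma> \<mu>) $$ (i,j)" using E by simp
        then have "(1/2) * (mtrace (F \<rho>) * \<Gamma> \<rho> $$ (i,j) + mtrace (F \<sigma>) * \<Gamma> \<sigma> $$ (i,j))
          = (1/2) * (mtrace (F \<rho>) + mtrace (F \<sigma>)) * ((1/2) * (\<Gamma> \<rho> $$ (i,j) + \<Gamma> \<sigma> $$ (i,j)))"
        proof -
          have a: "F \<rho> $$ (i,j) = mtrace (F \<rho>) * \<Gamma> \<rho> $$ (i,j)"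
            using H(2)[OF d(1)] ij Xc by (metis carrier_matD index_smult_mat(1))
          have b: "F \<sigma> $$ (i,j) = mtrace (F \<sigma>) * \<Gamma> \<sigma> $$ (i,j)"
            using H(2)[OF d(2)] ij Xc by (metis carrier_matD index_smult_mat(1))
          show ?thesis using \<open>F \<mu> $$ (i,j) = _\<close> unfolding tm Gm Fm using ij Xc Fc a b tm[unfolded Fm] by simp
        qed
        then show "\<Gamma> \<rho> $$ (i,j) = \<Gamma> \<sigma> $$ (i,j)" by (rule scalar_key[OF ne])
      qed (use Xc in auto)
    qed
    show ?thesis
    proof (cases "\<forall>\<rho> \<sigma>. density n \<rho> \<longrightarrow> density n \<sigma> \<longrightarrow> mtrace (F \<rho>) = mtrace (F \<sigma>)")
      case True
      define c where "c = mtrace (F \<rho>0)"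
      have "psd m (F \<rho>0)" using cp_psd[OF assms(3)] d0 unfolding density_def by blast
      then have "Im c = 0" unfolding c_def using mtrace_psd by blast
      define p where "p = Re c"
      have cp: "c = complex_of_real p" unfolding p_def using \<open>Im c = 0\<close> by (simp add: complex_eq_iff)
      have pp: "p > 0" unfolding p_def c_def using H(1)[OF d0] assms(4) by simp
      have LP: "linear_map_mat n m (\<lambda>A. complex_of_real (1 / p) \<cdot>\<^sub>m F A)"
        unfolding linear_map_mat_def
      proof (intro conjI ballI allI)
        fix A :: "complex mat" assume A: "A \<in> carrier_mat n n"
        show "complex_of_real (1 / p) \<cdot>\<^sub>m F A \<in> carrier_mat m m" using lin_carrier[OF LF A] by simp
        fix c' :: complex show "complex_of_real (1 / p) \<cdot>\<^sub>m F (c' \<cdot>\<^sub>m A) = c' \<cdot>\<^sub>m (complex_of_real (1 / p) \<cdot>\<^sub>m F A)"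
          using lin_smult[OF LF A] lin_carrier[OF LF A] by (auto simp: algebra_simps)
      next
        fix A B :: "complex mat" assume A: "A \<in> carrier_mat n n" and B: "B \<in> carrier_mat n n"
        show "complex_of_real (1 / p) \<cdot>\<^sub>m F (A + B) = complex_of_real (1 / p) \<cdot>\<^sub>m F A + complex_of_real (1 / p) \<cdot>\<^sub>m F B"
          using lin_add[OF LF A B] lin_carrier[OF LF A] lin_carrier[OF LF B] by (auto simp: algebra_simps)
      qed
      have "\<Gamma> \<rho> = complex_of_real (1 / p) \<cdot>\<^sub>m F \<rho>" if d: "density n \<rho>" for \<rho>
      proof -
        have "mtrace (F \<rho>) = c" using True d d0 unfolding c_def by blast
        then have "F \<rho> = complex_of_real p \<cdot>\<^sub>m \<Gamma> \<rho>" using H(2)[OF d] cp by simp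
        moreover have "\<Gamma> \<rho> \<in> carrier_mat m m" using lin_carrier[OF LG dc[OF d]] .
        ultimately show ?thesis using pp by (intro eq_matI) auto
      qed
      then have "\<forall>A \<in> carrier_mat n n. \<Gamma> A = complex_of_real (1 / p) \<cdot>\<^sub>m F A"
        using agree[OF LG LP] by blast
      then show ?thesis using pp by blast
    next
      case False
      then obtain \<rho>1 \<sigma>1 where d1: "density n \<rho>1" "density n \<sigma>1" and ne: "mtrace (F \<rho>1) \<noteq> mtrace (F \<sigma>1)"
        by blast
      have const: "\<Gamma> \<tau> = \<Gamma> \<rho>1" if d: "density n \<tau>" for \<tau>
        using key[OF d d1(1)] key[OF d d1(2)] key[OF d1] ne by metis
      define r where "r = \<Gamma> \<rho>1"
      have rc: "r \<in> carrier_mat m m" unfolding r_def using lin_carrier[OF LG dc[OF d1(1)]] .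
      have "psd m r" unfolding r_def using cp_psd[OF assms(1)] d1(1) unfolding density_def by blast
      moreover have "mtrace r = 1" unfolding r_def using assms(2) d1(1) dc[OF d1(1)]
        unfolding trace_preserving_def density_def by simp
      ultimately have dr: "density m r" unfolding density_def by simp
      have LP: "linear_map_mat n m (\<lambda>A. mtrace A \<cdot>\<^sub>m r)"
        unfolding linear_map_mat_def
      proof (intro conjI ballI allI)
        fix A :: "complex mat" assume A: "A \<in> carrier_mat n n"
        show "mtrace A \<cdot>\<^sub>m r \<in> carrier_mat m m" using rc by simp
        fix c' :: complex show "mtrace (c' \<cdot>\<^sub>m A) \<cdot>\<^sub>m r = c' \<cdot>\<^sub>m (mtrace A \<cdot>\<^sub>m r)"
          using rc mtrace_smult[OF A] by (auto simp: algebra_simps)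
      next
        fix A B :: "complex mat" assume A: "A \<in> carrier_mat n n" and B: "B \<in> carrier_mat n n"
        show "mtrace (A + B) \<cdot>\<^sub>m r = mtrace A \<cdot>\<^sub>m r + mtrace B \<cdot>\<^sub>m r"
          using rc mtrace_add[OF A B] by (auto simp: algebra_simps)
      qed
      have "\<Gamma> \<rho> = mtrace \<rho> \<cdot>\<^sub>m r" if d: "density n \<rho>" for \<rho>
        using const[OF d] d rc unfolding r_def density_def by (intro eq_matI) auto
      then have "\<forall>A \<in> carrier_mat n n. \<Gamma> A = mtrace A \<cdot>\<^sub>m r"
        using agree[OF LG LP] by blast
      then show ?thesis using dr by blast
    qed
  qed
qed

end
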